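(* Let $G$ be a graph, let $x$ be a vertex of degree at least $3$, and suppose that $G$ contains $t\geq 2$ twin stems of length $2$ rooted at $x$, i.e. paths $x u_i u_i'$ ($1\le i\le t$) with all $u_i,u_i'$ distinct, each $u_i$ of degree $2$ (adjacent only to $x$ and $u_i'$) and each $u_i'$ of degree $1$. Then $Dist(G)\geq \psi(t)$.
   Context: $Dist(H)$ is the least $t$ such that $H$ has a labeling $V(H)\to\{1,\dots,t\}$ preserved by no non-identity automorphism of $H$. The function $\psi:\mathbb{N}\setminus\{1\}\to\mathbb{N}\setminus\{1\}$ is defined by $\psi(m)=k$, where $k$ is the least number (with $k\ge 2$) such that $m\leq 2\binom{k}{2}+k$. For example $\psi(19)=5$. *)

theory Defs
  imports Main
begin

definition simple_graph :: "'a set \<Rightarrow> ('a \<Rightarrow> 'a \<Rightarrow> bool) \<Rightarrow> bool" where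
  "simple_graph V E \<longleftrightarrow> finite V \<and> (\<forall>x y. E x y \<longrightarrow> x \<in> V \<and> y \<in> V)
     \<and> (\<forall>x y. E x y \<longrightarrow> E y x) \<and> (\<forall>x. \<not> E x x)"

definition degree :: "'a set \<Rightarrow> ('a \<Rightarrow> 'a \<Rightarrow> bool) \<Rightarrow> 'a \<Rightarrow> nat" where
  "degree V E x = card {y \<in> V. E x y}"

definition graph_aut :: "'a set \<Rightarrow> ('a \<Rightarrow> 'a \<Rightarrow> bool) \<Rightarrow> ('a \<Rightarrow> 'a) \<Rightarrow> bool" where
  "graph_aut V E f \<longleftrightarrow> bij_betw f V V \<and> (\<forall>x\<in>V. \<forall>y\<in>V. E (f x) (f y) \<longleftrightarrow> E x y)"

definition distinguishing :: "'a set \<Rightarrow> ('a \<Rightarrow> 'a \<Rightarrow> bool) \<Rightarrow> ('a \<Rightarrow> nat) \<Rightarrow> bool" where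
  "distinguishing V E c \<longleftrightarrow>
     (\<forall>f. graph_aut V E f \<and> (\<forall>v\<in>V. c (f v) = c v) \<longrightarrow> (\<forall>v\<in>V. f v = v))"

definition Dist :: "'a set \<Rightarrow> ('a \<Rightarrow> 'a \<Rightarrow> bool) \<Rightarrow> nat" where
  "Dist V E = (LEAST t. \<exists>c. (\<forall>v\<in>V. c v \<in> {1..t}) \<and> distinguishing V E c)"

definition psi :: "nat \<Rightarrow> nat" where
  "psi m = (LEAST k. 2 \<le> k \<and> m \<le> 2 * (k choose 2) + k)"

end

theory Submission
  imports Defs
begin

lemma card2_eq: "card A = 2 \<Longrightarrow> a \<in> A \<Longrightarrow> b \<in> A \<Longrightarrow> a \<noteq> b \<Longrightarrow> A = {a, b}"
  by (auto simp: card_2_iff') metis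

lemma card1_eq: "card A = 1 \<Longrightarrow> b \<in> A \<Longrightarrow> A = {b}"
  by (auto simp: card_1_singleton_iff)

lemma sq_eq: "2 * ((d::nat) choose 2) + d = d * d"
proof -
  have "even (d * (d - 1))" by (cases "even d") auto
  then have "2 * (d * (d - 1) div 2) = d * (d - 1)" by simp
  then show ?thesis by (simp add: choose_two) (cases d, auto)
qed

lemma swap_aut:
  fixes V :: "'a set" and E :: "'a \<Rightarrow> 'a \<Rightarrow> bool"
  assumes sg: "simple_graph V E"
    and x: "x \<in> V"
    and d: "a \<noteq> b" "a \<noteq> a'" "a \<noteq> b'" "b \<noteq> a'" "b \<noteq> b'" "a' \<noteq> b'"
    and xn: "x \<noteq> a" "x \<noteq> b" "x \<noteq> a'" "x \<noteq> b'"
    and inV: "a \<in> V" "b \<in> V" "a' \<in> V" "b' \<in> V"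
    and Na: "\<And>y. E a y \<longleftrightarrow> y = x \<or> y = a'"
    and Nb: "\<And>y. E b y \<longleftrightarrow> y = x \<or> y = b'"
    and Na': "\<And>y. E a' y \<longleftrightarrow> y = a"
    and Nb': "\<And>y. E b' y \<longleftrightarrow> y = b"
  defines "\<sigma> \<equiv> \<lambda>v. if v = a then b else if v = b then a else if v = a' then b'
                   else if v = b' then a' else v"
  shows "graph_aut V E \<sigma>"
proof -
  have sym: "\<And>p q. E p q \<longleftrightarrow> E q p" using sg unfolding simple_graph_def by blast
  have inv: "\<And>v. \<sigma> (\<sigma> v) = v" unfolding \<sigma>_def using d by auto
  have mapV: "\<And>v. v \<in> V \<Longrightarrow> \<sigma> v \<in> V" unfolding \<sigma>_def using inV by auto
  have bij: "bij_betw \<sigma> V V"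
    by (rule bij_betw_byWitness[where f'=\<sigma>]) (use inv mapV in auto)
  have fwd: "E (\<sigma> p) (\<sigma> q)" if "E p q" for p q
  proof -
    have Ea: "E p a \<longleftrightarrow> p = x \<or> p = a'" for p using Na sym by blast
    have Eb: "E p b \<longleftrightarrow> p = x \<or> p = b'" for p using Nb sym by blast
    have Ea': "E p a' \<longleftrightarrow> p = a" for p using Na' sym by blast
    have Eb': "E p b' \<longleftrightarrow> p = b" for p using Nb' sym by blast
    show ?thesis
      using that d xn Na Nb Na' Nb' Ea Eb Ea' Eb' unfolding \<sigma>_def
      by (auto split: if_splits)
  qed
  have "E (\<sigma> p) (\<sigma> q) \<longleftrightarrow> E p q" for p q
    using fwd[of "\<sigma> p" "\<sigma> q"] fwd[of p q] inv by auto
  then show ?thesis unfolding graph_aut_def using bij by auto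
qed

lemma main:
  fixes V :: "'a set" and E :: "'a \<Rightarrow> 'a \<Rightarrow> bool" and x :: 'a
    and t :: nat and u u' :: "nat \<Rightarrow> 'a"
  assumes sg: "simple_graph V E"
    and xV: "x \<in> V" and dx: "degree V E x \<ge> 3"
    and iu: "inj_on u {1..t}" and iu': "inj_on u' {1..t}"
    and dis: "\<forall>i\<in>{1..t}. \<forall>j\<in>{1..t}. u i \<noteq> u' j"
    and inV: "\<forall>i\<in>{1..t}. u i \<in> V \<and> u' i \<in> V"
    and ed: "\<forall>i\<in>{1..t}. E x (u i) \<and> E (u i) (u' i)"
    and dg: "\<forall>i\<in>{1..t}. degree V E (u i) = 2 \<and> degree V E (u' i) = 1"
    and c: "\<forall>v\<in>V. c v \<in> {1..d}" and dc: "distinguishing V E c"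
  shows "t \<le> d * d"
proof -
  have irr: "\<And>p. \<not> E p p" and sym: "\<And>p q. E p q \<Longrightarrow> E q p"
    and inE: "\<And>p q. E p q \<Longrightarrow> p \<in> V \<and> q \<in> V"
    using sg unfolding simple_graph_def by blast+
  have xu: "x \<noteq> u k" if "k \<in> {1..t}" for k using ed that irr by metis
  have xu': "x \<noteq> u' k" if "k \<in> {1..t}" for k
  proof
    assume h: "x = u' k"
    then have "degree V E x = 1" using dg that by auto
    then show False using dx by simp
  qed
  have Nu: "E (u k) y \<longleftrightarrow> y = x \<or> y = u' k" if k: "k \<in> {1..t}" for k y
  proof -
    have "{y\<in>V. E (u k) y} = {x, u' k}"
      apply (rule card2_eq)
      using dg k ed sym inV xV xu' unfolding degree_def by auto
    then show ?thesis using inE by blast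
  qed
  have Nu': "E (u' k) y \<longleftrightarrow> y = u k" if k: "k \<in> {1..t}" for k y
  proof -
    have "{y\<in>V. E (u' k) y} = {u k}"
      apply (rule card1_eq)
      using dg k ed sym inV unfolding degree_def by auto
    then show ?thesis using inE by blast
  qed
  define g where "g i = (c (u i), c (u' i))" for i
  have inj: "inj_on g {1..t}"
  proof (rule inj_onI, rule ccontr)
    fix i j assume i: "i \<in> {1..t}" and j: "j \<in> {1..t}" and gij: "g i = g j" and ne: "i \<noteq> j"
    define \<sigma> where "\<sigma> \<equiv> \<lambda>v. if v = u i then u j else if v = u j then u i else if v = u' i then u' j
                   else if v = u' j then u' i else v"
    have d1: "u i \<noteq> u j" using iu i j ne by (meson inj_on_def)
    have d2: "u' i \<noteq> u' j" using iu' i j ne by (meson inj_on_def)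
    have aut: "graph_aut V E \<sigma>"
      unfolding \<sigma>_def
      apply (rule swap_aut[OF sg xV])
      using d1 d2 dis i j xu xu' inV Nu Nu' by auto
    have cs: "\<forall>v\<in>V. c (\<sigma> v) = c v" using gij unfolding \<sigma>_def g_def by auto
    have "\<sigma> (u i) = u i" using dc aut cs inV i unfolding distinguishing_def by blast
    then show False using d1 unfolding \<sigma>_def by simp
  qed
  have "g ` {1..t} \<subseteq> {1..d} \<times> {1..d}" using c inV unfolding g_def by auto
  then have "card (g ` {1..t}) \<le> card ({1..d} \<times> {1..d})"
    by (intro card_mono) auto
  then show ?thesis using card_image[OF inj] by (simp add: card_cartesian_product)
qed

theorem lemma2p5:
  fixes V :: "'a set" and E :: "'a \<Rightarrow> 'a \<Rightarrow> bool" and x :: 'a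
    and t :: nat and u u' :: "nat \<Rightarrow> 'a"
  assumes "simple_graph V E"
    and "x \<in> V" and "degree V E x \<ge> 3"
    and "t \<ge> 2"
    and "inj_on u {1..t}" and "inj_on u' {1..t}"
    and "\<forall>i\<in>{1..t}. \<forall>j\<in>{1..t}. u i \<noteq> u' j"
    and "\<forall>i\<in>{1..t}. u i \<in> V \<and> u' i \<in> V"
    and "\<forall>i\<in>{1..t}. E x (u i) \<and> E (u i) (u' i)"
    and "\<forall>i\<in>{1..t}. degree V E (u i) = 2 \<and> degree V E (u' i) = 1"
  shows "Dist V E \<ge> psi t"
proof -
  have fin: "finite V" using assms(1) unfolding simple_graph_def by blast
  obtain f where f: "bij_betw f V {0..<card V}"
    using ex_bij_betw_finite_nat[OF fin] by blast
  have ex: "\<exists>n c. (\<forall>v\<in>V. c v \<in> {1..n}) \<and> distinguishing V E c"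
  proof (intro exI conjI)
    show "\<forall>v\<in>V. Suc (f v) \<in> {1..card V}" using f bij_betwE by fastforce
    show "distinguishing V E (\<lambda>v. Suc (f v))"
      unfolding distinguishing_def graph_aut_def
    proof (intro allI impI ballI)
      fix h v assume h: "(bij_betw h V V \<and> (\<forall>x\<in>V. \<forall>y\<in>V. E (h x) (h y) = E x y)) \<and> (\<forall>v\<in>V. Suc (f (h v)) = Suc (f v))"
        and v: "v \<in> V"
      then have "h v \<in> V" by (meson bij_betwE)
      moreover have "f (h v) = f v" using h v by auto
      ultimately show "h v = v" using bij_betw_imp_inj_on[OF f] v inj_onD by metis
    qed
  qed
  then have "\<exists>c. (\<forall>v\<in>V. c v \<in> {1..Dist V E}) \<and> distinguishing V E c"
    unfolding Dist_def by (rule LeastI_ex)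
  then obtain c where c: "\<forall>v\<in>V. c v \<in> {1..Dist V E}" "distinguishing V E c" by blast
  have le: "t \<le> Dist V E * Dist V E"
    using main[OF assms(1,2,3,5-10) c] .
  have "2 \<le> Dist V E"
  proof (rule ccontr)
    assume "\<not> 2 \<le> Dist V E"
    then have "Dist V E * Dist V E \<le> 1" by (cases "Dist V E") auto
    then show False using le assms(4) by simp
  qed
  moreover have "t \<le> 2 * (Dist V E choose 2) + Dist V E" using le sq_eq[of "Dist V E"] by simp
  ultimately show ?thesis unfolding psi_def
    by (rule Least_le[where P="\<lambda>k. 2 \<le> k \<and> t \<le> 2 * (k choose 2) + k", OF conjI])
qed

end
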